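(* Let $L\colon\mathbb R\times\mathbb R\to\mathbb R$, $(x,\dot x)\mapsto L(x,\dot x)$, be continuously differentiable with $L_x(0,0)=L_{\dot x}(0,0)=0$ and $L(0,\dot x)=0$ for every $\dot x\in\mathbb R$. Consider the problem $$\int_0^1L(x(t),\dot x(t))\,dt\to\min,\quad x(0)=x(1)=0.$$ If the function $\widehat x\equiv0$ delivers a strong local minimum in this problem, then the function $\dot x\mapsto L_x(0,\dot x)$ is linear on $\mathbb R$.
   Context: A strong local minimum means: there is a neighbourhood of $\widehat x$ in the uniform norm on $C([0,1])$ such that the functional at any admissible $x$ (absolutely continuous with $x(0)=x(1)=0$) in that neighbourhood is at least its value at $\widehat x$. *)

theory Defs
  imports "HOL-Analysis.Analysis"
begin

definition absolutely_continuous_fun_on :: "real set \<Rightarrow> (real \<Rightarrow> real) \<Rightarrow> bool" where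
  "absolutely_continuous_fun_on S f \<longleftrightarrow>
     (\<forall>\<epsilon>>0. \<exists>\<delta>>0. \<forall>(n::nat) (a::nat \<Rightarrow> real) (b::nat \<Rightarrow> real).
        (\<forall>k<n. a k \<le> b k \<and> {a k..b k} \<subseteq> S) \<and>
        (\<forall>i<n. \<forall>j<n. i \<noteq> j \<longrightarrow> b i \<le> a j \<or> b j \<le> a i) \<and>
        (\<Sum>k<n. b k - a k) < \<delta>
        \<longrightarrow> (\<Sum>k<n. \<bar>f (b k) - f (a k)\<bar>) < \<epsilon>)"

definition admissible :: "(real \<Rightarrow> real) \<Rightarrow> bool" where
  "admissible x \<longleftrightarrow> absolutely_continuous_fun_on {0..1} x \<and> x 0 = 0 \<and> x 1 = 0"

text \<open>The integrand t \<mapsto> L(x(t), x'(t)); the derivative exists a.e. for admissible x.\<close>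
definition integrand :: "(real \<times> real \<Rightarrow> real) \<Rightarrow> (real \<Rightarrow> real) \<Rightarrow> real \<Rightarrow> real" where
  "integrand L x t = L (x t, vector_derivative x (at t))"

definition functional :: "(real \<times> real \<Rightarrow> real) \<Rightarrow> (real \<Rightarrow> real) \<Rightarrow> real" where
  "functional L x = integral {0..1} (integrand L x)"

definition strong_local_min :: "(real \<times> real \<Rightarrow> real) \<Rightarrow> (real \<Rightarrow> real) \<Rightarrow> bool" where
  "strong_local_min L xhat \<longleftrightarrow>
     admissible xhat \<and> integrand L xhat absolutely_integrable_on {0..1} \<and>
     (\<exists>\<delta>>0. \<forall>x. admissible x \<and> (\<forall>t\<in>{0..1}. \<bar>x t - xhat t\<bar> < \<delta>) \<and>
        integrand L x absolutely_integrable_on {0..1}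
        \<longrightarrow> functional L x \<ge> functional L xhat)"

definition Lx :: "(real \<times> real \<Rightarrow> real) \<Rightarrow> real \<times> real \<Rightarrow> real" where
  "Lx L p = deriv (\<lambda>s. L (s, snd p)) (fst p)"

definition Lv :: "(real \<times> real \<Rightarrow> real) \<Rightarrow> real \<times> real \<Rightarrow> real" where
  "Lv L p = deriv (\<lambda>v. L (fst p, v)) (snd p)"

end

theory Submission
  imports Defs
begin

lemma piece:
  fixes h g u :: "real \<Rightarrow> real"
  assumes pq: "p \<le> q" and gc: "continuous_on {p..q} g"
    and hg: "\<And>t. t \<in> {p<..<q} \<Longrightarrow> h t = g t"
    and gu: "\<And>t. t \<in> {p..q} \<Longrightarrow> g t \<le> u t"
    and ui: "(u has_integral U) {p..q}"
  shows "h absolutely_integrable_on {p..q} \<and> integral {p..q} h \<le> U"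
proof -
  have neg: "negligible {p,q}" by simp
  have ga: "g absolutely_integrable_on {p..q}"
    using absolutely_integrable_continuous_real[OF gc] .
  have ex: "\<And>x. x \<in> {p..q} - {p,q} \<Longrightarrow> h x = g x" using hg by auto
  have ha: "h absolutely_integrable_on {p..q}"
    by (rule absolutely_integrable_spike[OF ga neg ex])
  have "integral {p..q} h = integral {p..q} g"
    using integral_spike[of "{p,q}" "{p..q}" h g] neg ex by auto
  also have "\<dots> \<le> integral {p..q} u"
    by (rule integral_le) (use integrable_continuous_interval[OF gc] ui gu in auto)
  also have "\<dots> = U" using ui by (rule integral_unique)
  finally show ?thesis using ha by simp
qed

lemma linint:
  fixes K m p q :: real
  assumes "p \<le> q"
  shows "((\<lambda>t. K*t + m) has_integral (K*(q^2-p^2)/2 + m*(q-p))) {p..q}"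
proof -
  have "((\<lambda>t. K*t^2/2 + m*t) has_vector_derivative (K*t + m)) (at t within {p..q})" for t
    unfolding has_real_derivative_iff_has_vector_derivative[symmetric]
    by (auto intro!: derivative_eq_intros)
  from fundamental_theorem_of_calculus[OF assms this]
  show ?thesis by (simp add: algebra_simps diff_divide_distrib)
qed

lemma estimate:
  fixes L :: "real \<times> real \<Rightarrow> real"
  assumes diff: "\<forall>p. L differentiable (at p)" and L0: "\<forall>v. L (0, v) = 0" and e: "e > 0"
  shows "\<exists>d>0. \<forall>r. \<bar>r\<bar> < d \<longrightarrow> L (r, s) \<le> r * Lx L (0, s) + e * \<bar>r\<bar>"
proof -
  have "(\<lambda>r. L (r, s)) differentiable (at 0)"
  proof -
    have "(\<lambda>r::real. (r, s)) differentiable (at 0)"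
      by (auto intro!: derivative_intros simp: differentiable_def)
    moreover have "L differentiable (at ((\<lambda>r::real. (r, s)) 0))" using diff by blast
    ultimately show ?thesis using differentiable_chain_at[of "\<lambda>r::real. (r, s)" 0 L]
      by (simp add: o_def)
  qed
  then have "DERIV (\<lambda>r. L (r, s)) 0 :> Lx L (0, s)"
    using DERIV_deriv_iff_real_differentiable by (simp add: Lx_def)
  then have "((\<lambda>r. L (r, s)) has_derivative (\<lambda>h. Lx L (0, s) * h)) (at 0)"
    by (simp add: has_field_derivative_def)
  then obtain d where d: "d > 0" "\<forall>y. norm (y - 0) < d \<longrightarrow>
      norm (L (y, s) - L (0, s) - Lx L (0, s) * (y - 0)) \<le> e * norm (y - 0)"
    using e unfolding has_derivative_at_alt by blast
  show ?thesis
  proof (intro exI[of _ d] conjI allI impI)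
    fix r :: real assume "\<bar>r\<bar> < d"
    then have "\<bar>L (r, s) - Lx L (0, s) * r\<bar> \<le> e * \<bar>r\<bar>" using d L0 by auto
    then show "L (r, s) \<le> r * Lx L (0, s) + e * \<bar>r\<bar>" by (simp add: mult.commute)
  qed (rule d)
qed

lemma lipAC:
  fixes x :: "real \<Rightarrow> real"
  assumes M: "M > 0" and lip: "\<And>s t. \<bar>x s - x t\<bar> \<le> M * \<bar>s - t\<bar>"
  shows "absolutely_continuous_fun_on S x"
  unfolding absolutely_continuous_fun_on_def
proof (intro allI impI)
  fix e :: real assume e: "e > 0"
  show "\<exists>\<delta>>0. \<forall>(n::nat) (a::nat \<Rightarrow> real) (b::nat \<Rightarrow> real).
        (\<forall>k<n. a k \<le> b k \<and> {a k..b k} \<subseteq> S) \<and>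
        (\<forall>i<n. \<forall>j<n. i \<noteq> j \<longrightarrow> b i \<le> a j \<or> b j \<le> a i) \<and>
        (\<Sum>k<n. b k - a k) < \<delta>
        \<longrightarrow> (\<Sum>k<n. \<bar>x (b k) - x (a k)\<bar>) < e"
  proof (intro exI[of _ "e / M"] conjI allI impI)
    show "e / M > 0" using e M by simp
    fix n :: nat and a b :: "nat \<Rightarrow> real"
    assume h: "(\<forall>k<n. a k \<le> b k \<and> {a k..b k} \<subseteq> S) \<and>
        (\<forall>i<n. \<forall>j<n. i \<noteq> j \<longrightarrow> b i \<le> a j \<or> b j \<le> a i) \<and>
        (\<Sum>k<n. b k - a k) < e / M"
    have "(\<Sum>k<n. \<bar>x (b k) - x (a k)\<bar>) \<le> (\<Sum>k<n. M * (b k - a k))"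
    proof (rule sum_mono)
      fix k assume "k \<in> {..<n}"
      then have "a k \<le> b k" using h by auto
      then show "\<bar>x (b k) - x (a k)\<bar> \<le> M * (b k - a k)" using lip[of "b k" "a k"] by simp
    qed
    also have "\<dots> = M * (\<Sum>k<n. b k - a k)" by (simp add: sum_distrib_left)
    also have "\<dots> < M * (e / M)" using h M by (intro mult_strict_left_mono) auto
    also have "\<dots> = e" using M by simp
    finally show "(\<Sum>k<n. \<bar>x (b k) - x (a k)\<bar>) < e" .
  qed
qed


lemma maxmin_lip:
  fixes B C B' C' D :: real
  assumes "\<bar>B - B'\<bar> \<le> D" "\<bar>C - C'\<bar> \<le> D"
  shows "\<bar>max 0 (min B C) - max 0 (min B' C')\<bar> \<le> D"
  using assms by (simp add: max_def min_def abs_if split: if_splits)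

lemma tent_eps:
  fixes L :: "real \<times> real \<Rightarrow> real"
  assumes diff: "\<forall>p. L differentiable (at p)"
    and L0: "\<forall>v. L (0, v) = 0"
    and minimum: "strong_local_min L (\<lambda>t. 0)"
    and a: "a > 0" and b: "b > 0" and sg: "\<sigma> = 1 \<or> \<sigma> = -1" and e: "e > 0"
  shows "\<sigma> * a * Lx L (0, \<sigma>/a) + \<sigma> * b * Lx L (0, -\<sigma>/b) + e * (a + b) \<ge> 0"
proof -
  have ss: "\<sigma> * \<sigma> = 1" and sa: "\<bar>\<sigma>\<bar> = 1" using sg by auto
  have ss': "\<sigma> * (\<sigma> * z) = z" for z using sg by auto
  define f where "f s = Lx L (0, s)" for s
  define s1 where "s1 = \<sigma>/a"
  define s2 where "s2 = -\<sigma>/b"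
  obtain d0 where d0: "d0 > 0" and d0min: "\<And>x. admissible x \<and> (\<forall>t\<in>{0..1}. \<bar>x t - 0\<bar> < d0) \<and>
        integrand L x absolutely_integrable_on {0..1}
        \<Longrightarrow> functional L x \<ge> functional L (\<lambda>t. 0)"
    using minimum unfolding strong_local_min_def by blast
  obtain d1 where d1: "d1 > 0" "\<And>r. \<bar>r\<bar> < d1 \<Longrightarrow> L (r, s1) \<le> r * f s1 + e * \<bar>r\<bar>"
    using estimate[OF diff L0 e, of s1] unfolding f_def by blast
  obtain d2 where d2: "d2 > 0" "\<And>r. \<bar>r\<bar> < d2 \<Longrightarrow> L (r, s2) \<le> r * f s2 + e * \<bar>r\<bar>"
    using estimate[OF diff L0 e, of s2] unfolding f_def by blast
  define \<tau> where "\<tau> = min (min d0 d1) (min d2 (1/(a+b))) / 2"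
  have tpos: "\<tau> > 0" using d0 d1 d2 a b by (simp add: \<tau>_def)
  have td0: "\<tau> < d0" and td1: "\<tau> < d1" and td2: "\<tau> < d2" using d0 d1 d2 a b by (auto simp: \<tau>_def)
  have tab: "\<tau> * (a + b) \<le> 1"
  proof -
    have m: "min (min d0 d1) (min d2 (1/(a+b))) \<le> 1/(a+b)" by simp
    have "1/(a+b) > 0" using a b by simp
    moreover have "min (min d0 d1) (min d2 (1/(a+b))) > 0" using d0 d1 d2 a b by simp
    ultimately have "\<tau> \<le> 1/(a+b)" using m unfolding \<tau>_def by (smt (verit) field_sum_of_halves)
    then show ?thesis using a b by (simp add: field_simps)
  qed
  define c where "c = \<tau> * (a + b)"
  define x where "x t = \<sigma> * max 0 (min (t/a) ((c - t)/b))" for t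
  have ta: "\<tau> * a \<ge> 0" "\<tau> * a \<le> c" using tpos a b by (auto simp: c_def algebra_simps)
  have c1: "c \<le> 1" "c \<ge> 0" using tab tpos a b by (auto simp: c_def)
  have cta: "c - \<tau> * a = \<tau> * b" by (simp add: c_def algebra_simps)
  have minle: "min (t/a) ((c - t)/b) \<le> \<tau>" for t
  proof (cases "t \<le> \<tau> * a")
    case True
    then have "t/a \<le> \<tau>" using a by (simp add: pos_divide_le_eq)
    then show ?thesis by simp
  next
    case False
    then have "c - t \<le> \<tau> * b" using cta by linarith
    then have "(c - t)/b \<le> \<tau>" using b by (simp add: pos_divide_le_eq)
    then show ?thesis by simp
  qed
  have xb: "\<bar>x t\<bar> \<le> \<tau>" for t
    using minle[of t] tpos by (simp add: x_def abs_mult sa)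
  have x1: "x t = \<sigma> * (t/a)" if "t \<in> {0..\<tau>*a}" for t
  proof -
    have "t/a \<le> \<tau>" using that a by (simp add: pos_divide_le_eq)
    moreover have "\<tau> \<le> (c - t)/b" using that b cta by (simp add: pos_le_divide_eq mult.commute)
    moreover have "t/a \<ge> 0" using that a by simp
    ultimately show ?thesis by (simp add: x_def)
  qed
  have x2: "x t = \<sigma> * ((c - t)/b)" if "t \<in> {\<tau>*a..c}" for t
  proof -
    have "t/a \<ge> \<tau>" using that a by (simp add: pos_le_divide_eq)
    moreover have "\<tau> \<ge> (c - t)/b" using that b cta by (simp add: pos_divide_le_eq mult.commute)
    moreover have "(c - t)/b \<ge> 0" using that b by simp
    ultimately show ?thesis by (simp add: x_def)
  qed
  have x3: "x t = 0" if "t \<ge> c" for t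
  proof -
    have "(c - t)/b \<le> 0" using that b by (simp add: divide_nonpos_pos)
    then show ?thesis by (simp add: x_def)
  qed
  have x0: "x 0 = 0" using x1[of 0] ta by simp
  have x1': "x 1 = 0" using x3 c1 by simp
  have lip: "\<bar>x s - x t\<bar> \<le> (1/a + 1/b) * \<bar>s - t\<bar>" for s t
  proof -
    have "\<bar>s/a - t/a\<bar> \<le> (1/a + 1/b) * \<bar>s - t\<bar>"
    proof -
      have "\<bar>s/a - t/a\<bar> = (1/a) * \<bar>s - t\<bar>" using a by (simp add: diff_divide_distrib[symmetric] abs_divide)
      also have "\<dots> \<le> (1/a + 1/b) * \<bar>s - t\<bar>" using b by (intro mult_right_mono) auto
      finally show ?thesis .
    qed
    moreover have "\<bar>(c - s)/b - (c - t)/b\<bar> \<le> (1/a + 1/b) * \<bar>s - t\<bar>"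
    proof -
      have "\<bar>(c - s)/b - (c - t)/b\<bar> = (1/b) * \<bar>s - t\<bar>" using b
        by (simp add: diff_divide_distrib[symmetric] abs_divide abs_minus_commute)
      also have "\<dots> \<le> (1/a + 1/b) * \<bar>s - t\<bar>" using a by (intro mult_right_mono) auto
      finally show ?thesis .
    qed
    ultimately have "\<bar>max 0 (min (s/a) ((c - s)/b)) - max 0 (min (t/a) ((c - t)/b))\<bar> \<le> (1/a + 1/b) * \<bar>s - t\<bar>"
      by (rule maxmin_lip)
    then show ?thesis by (simp add: x_def right_diff_distrib[symmetric] abs_mult sa)
  qed
  have Mpos: "0 < 1/a + 1/b" using a b by (intro add_pos_pos) auto
  have adm: "admissible x"
    unfolding admissible_def using lipAC[of "1/a + 1/b" x "{0..1}", OF Mpos lip] x0 x1' by auto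
  have Lc: "continuous_on UNIV L"
    using diff by (simp add: continuous_at_imp_continuous_on differentiable_imp_continuous_within)
  have D1: "vector_derivative x (at t) = s1" if "t \<in> {0<..<\<tau>*a}" for t
  proof -
    have "((\<lambda>t. \<sigma> * (t/a)) has_vector_derivative s1) (at t)"
      unfolding has_real_derivative_iff_has_vector_derivative[symmetric] s1_def
      using a b by (auto intro!: derivative_eq_intros)
    then have "(x has_vector_derivative s1) (at t)"
      by (rule has_vector_derivative_transform_within_open[of _ _ _ "{0<..<\<tau>*a}"])
         (use that x1 in auto)
    then show ?thesis by (rule vector_derivative_at)
  qed
  have D2: "vector_derivative x (at t) = s2" if "t \<in> {\<tau>*a<..<c}" for t
  proof -
    have "((\<lambda>t. \<sigma> * ((c - t)/b)) has_vector_derivative s2) (at t)"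
      unfolding has_real_derivative_iff_has_vector_derivative[symmetric] s2_def
      using a b by (auto intro!: derivative_eq_intros)
    then have "(x has_vector_derivative s2) (at t)"
      by (rule has_vector_derivative_transform_within_open[of _ _ _ "{\<tau>*a<..<c}"])
         (use that x2 in auto)
    then show ?thesis by (rule vector_derivative_at)
  qed
  define K1 where "K1 = \<sigma> * (f s1 + \<sigma> * e) / a"
  have P1: "integrand L x absolutely_integrable_on {0..\<tau>*a} \<and>
      integral {0..\<tau>*a} (integrand L x) \<le> K1 * ((\<tau>*a)^2 - 0^2)/2 + 0 * (\<tau>*a - 0)"
  proof (rule piece[where g = "\<lambda>t. L (\<sigma> * (t/a), s1)" and u = "\<lambda>t. K1 * t + 0"])
    show "0 \<le> \<tau>*a" using ta by simp
    show "continuous_on {0..\<tau>*a} (\<lambda>t. L (\<sigma> * (t/a), s1))"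
      by (intro continuous_on_compose2[OF Lc] continuous_intros) (use a in auto)
    show "integrand L x t = L (\<sigma> * (t/a), s1)" if "t \<in> {0<..<\<tau>*a}" for t
      using that x1[of t] D1[of t] by (simp add: integrand_def)
    show "L (\<sigma> * (t/a), s1) \<le> K1 * t + 0" if "t \<in> {0..\<tau>*a}" for t
    proof -
      have "\<bar>\<sigma> * (t/a)\<bar> \<le> \<tau>" using xb[of t] x1[OF that] by simp
      then have "\<bar>\<sigma> * (t/a)\<bar> < d1" using td1 by linarith
      then have "L (\<sigma> * (t/a), s1) \<le> \<sigma> * (t/a) * f s1 + e * \<bar>\<sigma> * (t/a)\<bar>"
        by (rule d1(2))
      also have "\<bar>\<sigma> * (t/a)\<bar> = \<sigma> * \<sigma> * (t/a)" using that a by (simp add: abs_mult sa ss)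
      also have "\<sigma> * (t/a) * f s1 + e * (\<sigma> * \<sigma> * (t/a)) = K1 * t + 0"
        using a by (simp add: K1_def field_simps)
      finally show ?thesis .
    qed
    show "((\<lambda>t. K1 * t + 0) has_integral (K1 * ((\<tau>*a)^2 - 0^2)/2 + 0 * (\<tau>*a - 0))) {0..\<tau>*a}"
      by (rule linint) (use ta in simp)
  qed
  define K2 where "K2 = - \<sigma> * (f s2 + \<sigma> * e) / b"
  define m2 where "m2 = \<sigma> * (f s2 + \<sigma> * e) * c / b"
  have P2: "integrand L x absolutely_integrable_on {\<tau>*a..c} \<and>
      integral {\<tau>*a..c} (integrand L x) \<le> K2 * (c^2 - (\<tau>*a)^2)/2 + m2 * (c - \<tau>*a)"
  proof (rule piece[where g = "\<lambda>t. L (\<sigma> * ((c - t)/b), s2)" and u = "\<lambda>t. K2 * t + m2"])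
    show "\<tau>*a \<le> c" using ta by simp
    show "continuous_on {\<tau>*a..c} (\<lambda>t. L (\<sigma> * ((c - t)/b), s2))"
      by (intro continuous_on_compose2[OF Lc] continuous_intros) (use b in auto)
    show "integrand L x t = L (\<sigma> * ((c - t)/b), s2)" if "t \<in> {\<tau>*a<..<c}" for t
      using that x2[of t] D2[of t] by (simp add: integrand_def)
    show "L (\<sigma> * ((c - t)/b), s2) \<le> K2 * t + m2" if "t \<in> {\<tau>*a..c}" for t
    proof -
      have "\<bar>\<sigma> * ((c - t)/b)\<bar> \<le> \<tau>" using xb[of t] x2[OF that] by simp
      then have "\<bar>\<sigma> * ((c - t)/b)\<bar> < d2" using td2 by linarith
      then have "L (\<sigma> * ((c - t)/b), s2) \<le> \<sigma> * ((c - t)/b) * f s2 + e * \<bar>\<sigma> * ((c - t)/b)\<bar>"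
        by (rule d2(2))
      also have "\<bar>\<sigma> * ((c - t)/b)\<bar> = \<sigma> * \<sigma> * ((c - t)/b)" using that b by (simp add: abs_mult sa ss)
      also have "\<sigma> * ((c - t)/b) * f s2 + e * (\<sigma> * \<sigma> * ((c - t)/b)) = K2 * t + m2"
        using b by (simp add: K2_def m2_def field_simps)
      finally show ?thesis .
    qed
    show "((\<lambda>t. K2 * t + m2) has_integral (K2 * (c^2 - (\<tau>*a)^2)/2 + m2 * (c - \<tau>*a))) {\<tau>*a..c}"
      by (rule linint) (use ta in simp)
  qed
  have P3: "integrand L x absolutely_integrable_on {c..1} \<and>
      integral {c..1} (integrand L x) \<le> 0 * (1^2 - c^2)/2 + 0 * (1 - c)"
  proof (rule piece[where g = "\<lambda>t. 0" and u = "\<lambda>t. 0 * t + 0"])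
    show "c \<le> 1" using c1 by simp
    show "integrand L x t = 0" if "t \<in> {c<..<1}" for t
      using that x3[of t] L0 by (simp add: integrand_def)
    show "((\<lambda>t. 0 * t + 0) has_integral (0 * (1^2 - c^2)/2 + 0 * (1 - c))) {c..1}"
      by (rule linint) (use c1 in simp)
  qed auto
  have tac: "0 \<le> \<tau>*a" "\<tau>*a \<le> c" using ta by auto
  have I0c: "integrand L x absolutely_integrable_on {0..c}"
    using absolutely_integrable_on_combine[OF P1[THEN conjunct1] P2[THEN conjunct1] tac] .
  have I01: "integrand L x absolutely_integrable_on {0..1}"
    using absolutely_integrable_on_combine[OF I0c P3[THEN conjunct1]] c1 by auto
  have i0c: "integrand L x integrable_on {0..c}" using I0c absolutely_integrable_on_def by blast
  have i01: "integrand L x integrable_on {0..1}" using I01 absolutely_integrable_on_def by blast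
  have "functional L x = integral {0..1} (integrand L x)" by (simp add: functional_def)
  also have "\<dots> = integral {0..c} (integrand L x) + integral {c..1} (integrand L x)"
    using Henstock_Kurzweil_Integration.integral_combine[OF c1(2) c1(1) i01] by simp
  also have "integral {0..c} (integrand L x) = integral {0..\<tau>*a} (integrand L x) + integral {\<tau>*a..c} (integrand L x)"
    using Henstock_Kurzweil_Integration.integral_combine[OF tac i0c] by simp
  finally have Fx: "functional L x \<le> (K1 * ((\<tau>*a)^2 - 0^2)/2 + 0 * (\<tau>*a - 0))
      + (K2 * (c^2 - (\<tau>*a)^2)/2 + m2 * (c - \<tau>*a)) + (0 * (1^2 - c^2)/2 + 0 * (1 - c))"
    using P1 P2 P3 by linarith
  have "integrand L (\<lambda>t. 0) = (\<lambda>t. 0)" using L0 by (simp add: integrand_def fun_eq_iff)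
  then have F0: "functional L (\<lambda>t. 0) = 0" by (simp add: functional_def)
  have "functional L x \<ge> functional L (\<lambda>t. 0)"
    by (rule d0min) (use adm I01 xb td0 in \<open>auto intro: le_less_trans\<close>)
  then have nn: "0 \<le> (K1 * ((\<tau>*a)^2 - 0^2)/2 + 0 * (\<tau>*a - 0))
      + (K2 * (c^2 - (\<tau>*a)^2)/2 + m2 * (c - \<tau>*a)) + (0 * (1^2 - c^2)/2 + 0 * (1 - c))"
    using Fx F0 by linarith
  have eq: "(K1 * ((\<tau>*a)^2 - 0^2)/2 + 0 * (\<tau>*a - 0))
      + (K2 * (c^2 - (\<tau>*a)^2)/2 + m2 * (c - \<tau>*a)) + (0 * (1^2 - c^2)/2 + 0 * (1 - c))
      = (\<tau>^2/2) * (\<sigma> * a * f s1 + \<sigma> * b * f s2 + e * (a + b))"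
    using a b ss by (simp add: K1_def K2_def m2_def c_def field_simps power2_eq_square) (simp add: ss')
  have "0 \<le> (\<tau>^2/2) * (\<sigma> * a * f s1 + \<sigma> * b * f s2 + e * (a + b))" using nn eq by simp
  moreover have "\<tau>^2/2 > 0" using tpos by simp
  ultimately have "0 \<le> \<sigma> * a * f s1 + \<sigma> * b * f s2 + e * (a + b)"
    by (simp add: zero_le_mult_iff)
  then show ?thesis by (simp add: f_def s1_def s2_def)
qed

lemma tent:
  fixes L :: "real \<times> real \<Rightarrow> real"
  assumes diff: "\<forall>p. L differentiable (at p)"
    and L0: "\<forall>v. L (0, v) = 0"
    and minimum: "strong_local_min L (\<lambda>t. 0)"
    and a: "a > 0" and b: "b > 0" and sg: "\<sigma> = 1 \<or> \<sigma> = -1"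
  shows "\<sigma> * a * Lx L (0, \<sigma>/a) + \<sigma> * b * Lx L (0, -\<sigma>/b) \<ge> 0"
proof (rule ccontr)
  define X where "X = \<sigma> * a * Lx L (0, \<sigma>/a) + \<sigma> * b * Lx L (0, -\<sigma>/b)"
  assume "\<not> ?thesis"
  then have X: "X < 0" by (simp add: X_def)
  define e where "e = - X / (2 * (a + b))"
  have "2 * (a + b) > 0" using a b by simp
  then have e: "e > 0" using X unfolding e_def by (intro divide_pos_pos) auto
  have "X + e * (a + b) \<ge> 0" using tent_eps[OF diff L0 minimum a b sg e] by (simp add: X_def)
  moreover have "e * (a + b) = - X / 2" using a b by (simp add: e_def field_simps)
  ultimately show False using X by linarith
qed

lemma key:
  fixes L :: "real \<times> real \<Rightarrow> real"
  assumes diff: "\<forall>p. L differentiable (at p)"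
    and L0: "\<forall>v. L (0, v) = 0"
    and minimum: "strong_local_min L (\<lambda>t. 0)"
    and u: "u > 0" and v: "v > 0"
  shows "Lx L (0, u) / u + Lx L (0, -v) / v = 0"
proof -
  have "1 * (1/u) * Lx L (0, 1/(1/u)) + 1 * (1/v) * Lx L (0, -1/(1/v)) \<ge> 0"
    using tent[OF diff L0 minimum, of "1/u" "1/v" 1] u v by simp
  then have A: "Lx L (0, u) / u + Lx L (0, -v) / v \<ge> 0" by simp
  have "(-1) * (1/v) * Lx L (0, (-1)/(1/v)) + (-1) * (1/u) * Lx L (0, -(-1)/(1/u)) \<ge> 0"
    using tent[OF diff L0 minimum, of "1/v" "1/u" "-1"] u v by simp
  then have B: "Lx L (0, u) / u + Lx L (0, -v) / v \<le> 0" by simp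
  show ?thesis using A B by linarith
qed

theorem mainTheorem3:
  fixes L :: "real \<times> real \<Rightarrow> real"
  assumes diff: "\<forall>p. L differentiable (at p)"
    and C1x: "continuous_on UNIV (Lx L)"
    and C1v: "continuous_on UNIV (Lv L)"
    and Lx00: "Lx L (0, 0) = 0"
    and Lv00: "Lv L (0, 0) = 0"
    and L0: "\<forall>v. L (0, v) = 0"
    and minimum: "strong_local_min L (\<lambda>t. 0)"
  shows "linear (\<lambda>v. Lx L (0, v))"
proof -
  define f where "f y = Lx L (0, y)" for y
  have k: "f u / u + f (-v) / v = 0" if "u > 0" "v > 0" for u v
    using key[OF diff L0 minimum that] by (simp add: f_def)
  have lin: "f y = y * f 1" for y
  proof -
    consider "y > 0" | "y < 0" | "y = 0" by linarith
    then show ?thesis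
    proof cases
      case 1
      have "f y / y = f 1" using k[OF 1, of 1] k[of 1 1] by simp
      then show ?thesis using 1 by (simp add: field_simps)
    next
      case 2
      have "f 1 + f y / (-y) = 0" using k[of 1 "-y"] 2 by simp
      then show ?thesis using 2 by (simp add: field_simps)
    next
      case 3
      then show ?thesis using Lx00 by (simp add: f_def)
    qed
  qed
  have "(\<lambda>v. Lx L (0, v)) = (\<lambda>v. v * f 1)" 
  proof (rule ext)
    fix v show "Lx L (0, v) = v * f 1" using lin[of v] unfolding f_def .
  qed
  moreover have "linear (\<lambda>v::real. v * f 1)" by (rule linearI) (simp_all add: algebra_simps)
  ultimately show ?thesis by simp
qed

end
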